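(* Let $\mathcal{X},\mathcal{Y},\mathcal{A},\mathcal{B}$ be systems with $\mathcal{X}$ trivial ($\mathsf{T}[\mathcal{X}]=\mathsf{I}$) and $\mathcal{A}$ classical ($\mathsf{T}[\mathcal{A}]=\mathsf{C}$), while $\mathcal{Y}$ and $\mathcal{B}$ have arbitrary types and dimensions. Then the resource type $\mathsf{I}\,\mathsf{T}[\mathcal{Y}]\rightarrow\mathsf{C}\,\mathsf{T}[\mathcal{B}]$ is $\mathsf{T}$-trivial: every nonsignaling resource $R_{\mathcal{A}\mathcal{B}|\mathcal{X}\mathcal{Y}}$ of this type (and these dimensions) is LOSR-free.
   Context: A system $\mathcal{H}$ is specified by a dimension $d[\mathcal{H}]\ge 1$ (Hilbert space $\mathbb{C}^{d[\mathcal{H}]}$ with computational basis $\{|i\rangle\}$) and a type $\mathsf{T}[\mathcal{H}]\in\{\mathsf{I},\mathsf{C},\mathsf{Q}\}$ (trivial, classical, quantum); a system is trivial iff its dimension is $1$. $\mathsf{D}(\mathcal{H})$ denotes density matrices. A (bipartite nonsignaling) resource with Alice's input $\mathcal{X}$ and output $\mathcal{A}$ and Bob's input $\mathcal{Y}$ and output $\mathcal{B}$ is a linear map $R$ from operators on $\mathcal{X}\otimes\mathcal{Y}$ to operators on $\mathcal{A}\otimes\mathcal{B}$ which is completely positive, satisfies $\mathrm{tr}\,R[\xi\otimes\psi]=1$ for all $\xi\in\mathsf{D}(\mathcal{X}),\psi\in\mathsf{D}(\mathcal{Y})$, and is nonsignaling: $\mathrm{tr}_{\mathcal{A}}R[\xi\otimes\psi]$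 does not depend on $\xi$ and $\mathrm{tr}_{\mathcal{B}}R[\xi\otimes\psi]$ does not depend on $\psi$. If an output, say $\mathcal{A}$, is classical then $\langle i_{\mathcal{A}}|R[\xi\otimes\psi]|j_{\mathcal{A}}\rangle=0$ for all $i\ne j$, $\xi,\psi$; if an input, say $\mathcal{X}$, is classical then $R[|i_{\mathcal{X}}\rangle\langle j_{\mathcal{X}}|\otimes\psi]=0$ for all $i\neq j$ and $\psi$ (analogously for $\mathcal{B}$, $\mathcal{Y}$). The type of $R$ is written $\mathsf{T}[\mathcal{X}]\mathsf{T}[\mathcal{Y}]\rightarrow\mathsf{T}[\mathcal{A}]\mathsf{T}[\mathcal{B}]$. A single-party resource $R_{\mathcal{A}|\mathcal{X}}$ is a CPTP map from operators on $\mathcal{X}$ to operators on $\mathcal{A}$ satisfying the analogous classicality constraints. A resource is LOSR-free if $R_{\mathcal{A}\mathcal{B}|\mathcal{X}\mathcal{Y}}=\sum_i p_i\,R^i_{\mathcal{A}|\mathcal{X}}\otimes R^i_{\mathcal{B}|\mathcal{Y}}$ for a probability distribution $(p_i)$ and single-party resources of the corresponding types and dimensions. A resource type is $\mathsf{T}$-trivial if every resource of that type is LOSR-free. *)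

theory Defs
  imports Complex_Main "Jordan_Normal_Form.Matrix"
begin

text \<open>Operators on C^d are complex d x d matrices (Jordan_Normal_Form mat).
  Composite system C^d1 (x) C^d2: the basis vector |i>|j> has index i*d2+j.\<close>

datatype stype = TI | TC | TQ   (* trivial, classical, quantum *)

type_synonym sys = "nat \<times> stype"   (* dimension, type *)

definition valid_sys :: "sys \<Rightarrow> bool" where
  "valid_sys S \<longleftrightarrow> fst S \<ge> 1 \<and> (snd S = TI \<longleftrightarrow> fst S = 1)"

definition tr :: "complex mat \<Rightarrow> complex" where
  "tr M = (\<Sum>i<dim_row M. M $$ (i,i))"

definition psd :: "nat \<Rightarrow> complex mat \<Rightarrow> bool" where
  "psd d M \<longleftrightarrow> M \<in> carrier_mat d d \<and>
     (\<forall>v \<in> carrier_vec d.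
        let q = (\<Sum>i<d. \<Sum>j<d. cnj (v $ i) * M $$ (i,j) * v $ j) in Im q = 0 \<and> Re q \<ge> 0)"

definition density :: "nat \<Rightarrow> complex mat \<Rightarrow> bool" where
  "density d M \<longleftrightarrow> psd d M \<and> tr M = 1"

definition ketbra :: "nat \<Rightarrow> nat \<Rightarrow> nat \<Rightarrow> complex mat" where
  "ketbra d i j = mat d d (\<lambda>(r,c). if r = i \<and> c = j then 1 else 0)"

definition tensor_mat :: "nat \<Rightarrow> nat \<Rightarrow> complex mat \<Rightarrow> complex mat \<Rightarrow> complex mat" where
  "tensor_mat d1 d2 A B =
     mat (d1*d2) (d1*d2) (\<lambda>(r,c). A $$ (r div d2, c div d2) * B $$ (r mod d2, c mod d2))"

definition ptrace_first :: "nat \<Rightarrow> nat \<Rightarrow> complex mat \<Rightarrow> complex mat" where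
  "ptrace_first d1 d2 M = mat d2 d2 (\<lambda>(b,b'). \<Sum>a<d1. M $$ (a*d2+b, a*d2+b'))"

definition ptrace_second :: "nat \<Rightarrow> nat \<Rightarrow> complex mat \<Rightarrow> complex mat" where
  "ptrace_second d1 d2 M = mat d1 d1 (\<lambda>(a,a'). \<Sum>b<d2. M $$ (a*d2+b, a'*d2+b))"

definition linear_map :: "nat \<Rightarrow> nat \<Rightarrow> (complex mat \<Rightarrow> complex mat) \<Rightarrow> bool" where
  "linear_map din dout R \<longleftrightarrow>
     (\<forall>M \<in> carrier_mat din din. R M \<in> carrier_mat dout dout) \<and>
     (\<forall>M \<in> carrier_mat din din. \<forall>N \<in> carrier_mat din din. R (M + N) = R M + R N) \<and>
     (\<forall>c. \<forall>M \<in> carrier_mat din din. R (c \<cdot>\<^sub>m M) = c \<cdot>\<^sub>m R M)"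

text \<open>(id_k (x) R) applied to an operator on C^k (x) C^din.\<close>
definition ampl :: "nat \<Rightarrow> nat \<Rightarrow> nat \<Rightarrow> (complex mat \<Rightarrow> complex mat) \<Rightarrow> complex mat \<Rightarrow> complex mat" where
  "ampl k din dout R M = mat (k*dout) (k*dout) (\<lambda>(r,c).
      R (mat din din (\<lambda>(s,t). M $$ ((r div dout)*din + s, (c div dout)*din + t)))
        $$ (r mod dout, c mod dout))"

definition CP :: "nat \<Rightarrow> nat \<Rightarrow> (complex mat \<Rightarrow> complex mat) \<Rightarrow> bool" where
  "CP din dout R \<longleftrightarrow> (\<forall>k \<ge> 1. \<forall>M. psd (k*din) M \<longrightarrow> psd (k*dout) (ampl k din dout R M))"

text \<open>Bipartite nonsignaling resource with Alice input X, output A, Bob input Y, output B.\<close>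
definition is_resource :: "sys \<Rightarrow> sys \<Rightarrow> sys \<Rightarrow> sys \<Rightarrow> (complex mat \<Rightarrow> complex mat) \<Rightarrow> bool" where
  "is_resource X Y A B R \<longleftrightarrow>
    (let dX = fst X; dY = fst Y; dA = fst A; dB = fst B in
     linear_map (dX*dY) (dA*dB) R \<and> CP (dX*dY) (dA*dB) R \<and>
     (\<forall>\<xi> \<psi>. density dX \<xi> \<and> density dY \<psi> \<longrightarrow> tr (R (tensor_mat dX dY \<xi> \<psi>)) = 1) \<and>
     (\<forall>\<xi> \<xi>' \<psi>. density dX \<xi> \<and> density dX \<xi>' \<and> density dY \<psi> \<longrightarrow>
        ptrace_first dA dB (R (tensor_mat dX dY \<xi> \<psi>)) = ptrace_first dA dB (R (tensor_mat dX dY \<xi>' \<psi>))) \<and>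
     (\<forall>\<xi> \<psi> \<psi>'. density dX \<xi> \<and> density dY \<psi> \<and> density dY \<psi>' \<longrightarrow>
        ptrace_second dA dB (R (tensor_mat dX dY \<xi> \<psi>)) = ptrace_second dA dB (R (tensor_mat dX dY \<xi> \<psi>'))) \<and>
     (snd A = TC \<longrightarrow> (\<forall>\<xi> \<psi>. density dX \<xi> \<and> density dY \<psi> \<longrightarrow>
        (\<forall>i<dA. \<forall>j<dA. i \<noteq> j \<longrightarrow> (\<forall>b<dB. \<forall>b'<dB.
           R (tensor_mat dX dY \<xi> \<psi>) $$ (i*dB+b, j*dB+b') = 0)))) \<and>
     (snd B = TC \<longrightarrow> (\<forall>\<xi> \<psi>. density dX \<xi> \<and> density dY \<psi> \<longrightarrow>
        (\<forall>i<dB. \<forall>j<dB. i \<noteq> j \<longrightarrow> (\<forall>a<dA. \<forall>a'<dA.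
           R (tensor_mat dX dY \<xi> \<psi>) $$ (a*dB+i, a'*dB+j) = 0)))) \<and>
     (snd X = TC \<longrightarrow> (\<forall>\<psi>. density dY \<psi> \<longrightarrow>
        (\<forall>i<dX. \<forall>j<dX. i \<noteq> j \<longrightarrow> R (tensor_mat dX dY (ketbra dX i j) \<psi>) = 0\<^sub>m (dA*dB) (dA*dB)))) \<and>
     (snd Y = TC \<longrightarrow> (\<forall>\<xi>. density dX \<xi> \<longrightarrow>
        (\<forall>i<dY. \<forall>j<dY. i \<noteq> j \<longrightarrow> R (tensor_mat dX dY \<xi> (ketbra dY i j)) = 0\<^sub>m (dA*dB) (dA*dB)))))"

definition is_single :: "sys \<Rightarrow> sys \<Rightarrow> (complex mat \<Rightarrow> complex mat) \<Rightarrow> bool" where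
  "is_single X A R \<longleftrightarrow>
    (let dX = fst X; dA = fst A in
     linear_map dX dA R \<and> CP dX dA R \<and>
     (\<forall>M \<in> carrier_mat dX dX. tr (R M) = tr M) \<and>
     (snd A = TC \<longrightarrow> (\<forall>\<xi>. density dX \<xi> \<longrightarrow> (\<forall>i<dA. \<forall>j<dA. i \<noteq> j \<longrightarrow> R \<xi> $$ (i,j) = 0))) \<and>
     (snd X = TC \<longrightarrow> (\<forall>i<dX. \<forall>j<dX. i \<noteq> j \<longrightarrow> R (ketbra dX i j) = 0\<^sub>m dA dA)))"

text \<open>(RA (x) RB)(M), the linear extension of RA(|x><x'|) (x) RB(|y><y'|).\<close>
definition tensor_map :: "nat \<Rightarrow> nat \<Rightarrow> nat \<Rightarrow> nat \<Rightarrow>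
    (complex mat \<Rightarrow> complex mat) \<Rightarrow> (complex mat \<Rightarrow> complex mat) \<Rightarrow> complex mat \<Rightarrow> complex mat" where
  "tensor_map dX dY dA dB RA RB M = mat (dA*dB) (dA*dB) (\<lambda>(r,c).
     \<Sum>x<dX. \<Sum>x'<dX. \<Sum>y<dY. \<Sum>y'<dY.
       M $$ (x*dY+y, x'*dY+y') * RA (ketbra dX x x') $$ (r div dB, c div dB)
         * RB (ketbra dY y y') $$ (r mod dB, c mod dB))"

definition LOSR_free :: "sys \<Rightarrow> sys \<Rightarrow> sys \<Rightarrow> sys \<Rightarrow> (complex mat \<Rightarrow> complex mat) \<Rightarrow> bool" where
  "LOSR_free X Y A B R \<longleftrightarrow>
    (\<exists>n (p :: nat \<Rightarrow> real) RA RB.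
       (\<forall>i<n. p i \<ge> 0) \<and> (\<Sum>i<n. p i) = 1 \<and>
       (\<forall>i<n. is_single X A (RA i) \<and> is_single Y B (RB i)) \<and>
       (\<forall>M \<in> carrier_mat (fst X * fst Y) (fst X * fst Y).
          R M = mat (fst A * fst B) (fst A * fst B) (\<lambda>rc.
             \<Sum>i<n. complex_of_real (p i) *
               tensor_map (fst X) (fst Y) (fst A) (fst B) (RA i) (RB i) M $$ rc)))"

definition T_trivial :: "sys \<Rightarrow> sys \<Rightarrow> sys \<Rightarrow> sys \<Rightarrow> bool" where
  "T_trivial X Y A B \<longleftrightarrow> (\<forall>R. is_resource X Y A B R \<longrightarrow> LOSR_free X Y A B R)"

end

theory Submission
  imports Defs
begin


lemma sum_two_pts:
  fixes A B :: "'a::comm_monoid_add" and d :: nat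
  assumes "i < d" "j < d" "i \<noteq> j"
  shows "(\<Sum>k<d. if k = i then A else if k = j then B else 0) = A + B"
proof -
  have "(\<Sum>k<d. if k = i then A else if k = j then B else 0) =
        (\<Sum>k\<in>{i,j}. if k = i then A else if k = j then B else 0)"
    using assms by (intro sum.mono_neutral_right) auto
  also have "\<dots> = A + B" using assms by simp
  finally show ?thesis .
qed

lemma sum_one_pt:
  fixes A :: "'a::comm_monoid_add" and d :: nat
  assumes "i < d"
  shows "(\<Sum>k<d. if k = i then A else 0) = A"
proof -
  have "(\<Sum>k<d. if k = i then A else 0) = (\<Sum>k\<in>{i}. if k = i then A else 0)"
    using assms by (intro sum.mono_neutral_right) auto
  then show ?thesis by simp
qed

lemma rank1_density:
  fixes w :: "nat \<Rightarrow> complex" and t :: real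
  assumes "t \<ge> 0" "t * (\<Sum>k<d. (cmod (w k))^2) = 1"
  shows "density d (mat d d (\<lambda>(r,c). complex_of_real t * (w r * cnj (w c))))"
proof -
  let ?D = "mat d d (\<lambda>(r,c). complex_of_real t * (w r * cnj (w c)))"
  have psd: "psd d ?D" unfolding psd_def Let_def
  proof (intro conjI ballI)
    show "?D \<in> carrier_mat d d" by simp
    fix v :: "complex vec" assume v: "v \<in> carrier_vec d"
    define z where "z = (\<Sum>i<d. cnj (v $ i) * w i)"
    have cz: "(\<Sum>j<d. cnj (w j) * v $ j) = cnj z" unfolding z_def by (simp add: mult.commute)
    have ds: "(\<Sum>i<d. \<Sum>j<d. (cnj (v $ i) * w i) * (cnj (w j) * v $ j)) = z * cnj z"
      unfolding cz[symmetric] unfolding z_def by (simp add: sum_product)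
    have "(\<Sum>i<d. \<Sum>j<d. cnj (v $ i) * ?D $$ (i, j) * v $ j) =
          (\<Sum>i<d. \<Sum>j<d. complex_of_real t * ((cnj (v $ i) * w i) * (cnj (w j) * v $ j)))"
      by (intro sum.cong refl) (simp add: algebra_simps)
    also have "\<dots> = complex_of_real t * (\<Sum>i<d. \<Sum>j<d. (cnj (v $ i) * w i) * (cnj (w j) * v $ j))"
      by (simp add: sum_distrib_left)
    also have "\<dots> = complex_of_real t * (z * cnj z)" unfolding ds ..
    also have "\<dots> = complex_of_real (t * (cmod z)^2)"
      by (simp only: complex_norm_square[symmetric] of_real_mult)
    finally have eq: "(\<Sum>i<d. \<Sum>j<d. cnj (v $ i) * ?D $$ (i, j) * v $ j) = complex_of_real (t * (cmod z)^2)" .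
    show "Im (\<Sum>i<d. \<Sum>j<d. cnj (v $ i) * ?D $$ (i, j) * v $ j) = 0" unfolding eq by simp
    show "0 \<le> Re (\<Sum>i<d. \<Sum>j<d. cnj (v $ i) * ?D $$ (i, j) * v $ j)" unfolding eq using assms by simp
  qed
  have "tr ?D = (\<Sum>i<d. complex_of_real t * (w i * cnj (w i)))" unfolding tr_def by simp
  also have "\<dots> = complex_of_real (t * (\<Sum>k<d. (cmod (w k))^2))"
    by (simp only: complex_norm_square[symmetric] sum_distrib_left of_real_mult of_real_sum)
  also have "\<dots> = 1" using assms by simp
  finally show ?thesis using psd unfolding density_def by simp
qed

lemma ketbra_density:
  assumes "i < d"
  shows "density d (ketbra d i i)"
proof -
  let ?w = "\<lambda>k. if k = i then (1::complex) else 0"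
  have "ketbra d i i = mat d d (\<lambda>(r,c). complex_of_real 1 * (?w r * cnj (?w c)))"
    unfolding ketbra_def by (intro eq_matI) auto
  moreover have "density d (mat d d (\<lambda>(r,c). complex_of_real 1 * (?w r * cnj (?w c))))"
  proof (rule rank1_density)
    have "(cmod (?w k))^2 = (if k = i then 1 else 0)" for k by simp
    then show "1 * (\<Sum>k<d. (cmod (?w k))^2) = 1" using sum_one_pt[OF assms, of "1::real"] by simp
  qed simp
  ultimately show ?thesis by simp
qed

lemma expand_functional:
  fixes F :: "complex mat \<Rightarrow> complex"
  assumes add: "\<And>M N. M \<in> carrier_mat d d \<Longrightarrow> N \<in> carrier_mat d d \<Longrightarrow> F (M + N) = F M + F N"
    and smul: "\<And>c M. M \<in> carrier_mat d d \<Longrightarrow> F (c \<cdot>\<^sub>m M) = c * F M"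
    and M: "M \<in> carrier_mat d d"
  shows "F M = (\<Sum>i<d. \<Sum>j<d. M $$ (i,j) * F (ketbra d i j))"
proof -
  define restr where "restr S = mat d d (\<lambda>(r,c). if (r,c) \<in> S then M $$ (r,c) else 0)" for S
  have rc: "restr S \<in> carrier_mat d d" for S unfolding restr_def by simp
  have kc: "ketbra d i j \<in> carrier_mat d d" for i j unfolding ketbra_def by simp
  have main: "S \<subseteq> {..<d} \<times> {..<d} \<Longrightarrow> F (restr S) = (\<Sum>p\<in>S. M $$ p * F (ketbra d (fst p) (snd p)))"
    if "finite S" for S
    using that
  proof (induction S rule: finite_induct)
    case empty
    have "restr {} = 0 \<cdot>\<^sub>m (0\<^sub>m d d)" unfolding restr_def by (intro eq_matI) auto
    then have "F (restr {}) = 0 * F (0\<^sub>m d d)" using smul[of "0\<^sub>m d d" 0] by simp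
    then show ?case by simp
  next
    case (insert p S)
    obtain i j where p: "p = (i,j)" by (cases p)
    have ij: "i < d" "j < d" using insert p by auto
    have "restr (insert p S) = restr S + M $$ (i,j) \<cdot>\<^sub>m ketbra d i j"
      unfolding restr_def ketbra_def p using insert p by (intro eq_matI) auto
    then have "F (restr (insert p S)) = F (restr S) + M $$ (i,j) * F (ketbra d i j)"
      using add[OF rc] smul[OF kc] kc by simp
    then show ?case using insert p by simp
  qed
  have "restr ({..<d} \<times> {..<d}) = M" unfolding restr_def using M by (intro eq_matI) auto
  then have "F M = (\<Sum>p\<in>{..<d} \<times> {..<d}. M $$ p * F (ketbra d (fst p) (snd p)))"
    using main[of "{..<d} \<times> {..<d}"] by simp
  also have "\<dots> = (\<Sum>i<d. \<Sum>j<d. M $$ (i,j) * F (ketbra d i j))"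
    by (simp add: sum.cartesian_product split_def)
  finally show ?thesis .
qed

lemma span_density:
  fixes F :: "complex mat \<Rightarrow> complex"
  assumes add: "\<And>M N. M \<in> carrier_mat d d \<Longrightarrow> N \<in> carrier_mat d d \<Longrightarrow> F (M + N) = F M + F N"
    and smul: "\<And>c M. M \<in> carrier_mat d d \<Longrightarrow> F (c \<cdot>\<^sub>m M) = c * F M"
    and dens: "\<And>\<psi>. density d \<psi> \<Longrightarrow> F \<psi> = 0"
    and M: "M \<in> carrier_mat d d"
  shows "F M = 0"
proof -
  define G where "G k l = F (ketbra d k l)" for k l
  have diag: "G i i = 0" if "i < d" for i unfolding G_def using dens ketbra_density that by blast
  have E: "G i j = 0" if ij: "i < d" "j < d" for i j
  proof (cases "i = j")
    case True then show ?thesis using diag ij by simp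
  next
    case False
    have key: "cnj c * G i j + c * G j i = 0" if c1: "cmod c = 1" for c
    proof -
      define w where "w k = (if k = i then 1 else if k = j then c else 0)" for k
      define D where "D = mat d d (\<lambda>(r,c'). complex_of_real (1/2) * (w r * cnj (w c')))"
      have "(cmod (w k))^2 = (if k = i then 1 else if k = j then 1 else 0)" for k
        unfolding w_def using c1 by auto
      then have "(\<Sum>k<d. (cmod (w k))^2) = 2" using sum_two_pts[OF ij False, of "1::real" 1] by simp
      then have "density d D" unfolding D_def by (intro rank1_density) auto
      then have FD: "F D = 0" by (rule dens)
      have Dc: "D \<in> carrier_mat d d" unfolding D_def by simp
      have inner: "(\<Sum>l<d. D $$ (k,l) * G k l) = (1/2) * w k * (G k i + cnj c * G k j)" if k: "k < d" for k
      proof -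
        have "D $$ (k,l) * G k l = (if l = i then (1/2) * w k * G k i else if l = j then (1/2) * w k * cnj c * G k j else 0)"
          if "l < d" for l
          unfolding D_def using k that by (auto simp: w_def)
        then have "(\<Sum>l<d. D $$ (k,l) * G k l) = (\<Sum>l<d. (if l = i then (1/2) * w k * G k i else if l = j then (1/2) * w k * cnj c * G k j else 0))"
          by (intro sum.cong) auto
        also have "\<dots> = (1/2) * w k * G k i + (1/2) * w k * cnj c * G k j" by (rule sum_two_pts[OF ij False])
        finally show ?thesis by (simp add: algebra_simps)
      qed
      have "F D = (\<Sum>k<d. \<Sum>l<d. D $$ (k,l) * G k l)" unfolding G_def by (rule expand_functional[OF add smul Dc])
      also have "\<dots> = (\<Sum>k<d. (1/2) * w k * (G k i + cnj c * G k j))" by (intro sum.cong) (auto simp: inner)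
      also have "\<dots> = (\<Sum>k<d. if k = i then (1/2) * (G i i + cnj c * G i j) else if k = j then (1/2) * c * (G j i + cnj c * G j j) else 0)"
        by (intro sum.cong) (auto simp: w_def)
      also have "\<dots> = (1/2) * (G i i + cnj c * G i j) + (1/2) * c * (G j i + cnj c * G j j)" by (rule sum_two_pts[OF ij False])
      also have "\<dots> = (1/2) * (cnj c * G i j + c * G j i)" using diag ij by (simp add: algebra_simps)
      finally show ?thesis using FD by simp
    qed
    have k1: "G i j + G j i = 0" using key[of 1] by simp
    have k2: "- \<i> * G i j + \<i> * G j i = 0" using key[of "\<i>"] by simp
    have "\<i> * (G j i - G i j) = 0" using k2 by (simp add: algebra_simps)
    then have "G j i = G i j" by simp
    then show ?thesis using k1 by simp
  qed
  have "F M = (\<Sum>i<d. \<Sum>j<d. M $$ (i,j) * G i j)" unfolding G_def by (rule expand_functional[OF add smul M])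
  also have "\<dots> = 0" using E by simp
  finally show ?thesis .
qed



lemma lin_nonneg_zero:
  fixes a b :: real
  assumes "\<And>s. 0 \<le> s * a + b"
  shows "a = 0"
proof (rule ccontr)
  assume "a \<noteq> 0"
  have "0 \<le> (-(\<bar>b\<bar>+1)/a) * a + b" by (rule assms)
  also have "\<dots> = -(\<bar>b\<bar>+1) + b" using \<open>a \<noteq> 0\<close> by simp
  finally show False by linarith
qed

lemma cplx_zero:
  fixes x y m :: complex
  assumes "\<And>t. Im (cnj t * x + t * y + m) = 0 \<and> 0 \<le> Re (cnj t * x + t * y + m)"
  shows "x = 0"
proof -
  have i1: "Im x + Im y + Im m = 0" using assms[of 1] by simp
  have i0: "Im m = 0" using assms[of 0] by simp
  have ii: "- Re x + Re y + Im m = 0" using assms[of "\<i>"] by simp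
  have "0 \<le> s * (Re x + Re y) + Re m" for s :: real
    using assms[of "complex_of_real s"] by (simp add: algebra_simps)
  then have r: "Re x + Re y = 0" by (rule lin_nonneg_zero)
  have "0 \<le> s * (Im x - Im y) + Re m" for s :: real
    using assms[of "\<i> * complex_of_real s"] by (simp add: algebra_simps)
  then have im: "Im x - Im y = 0" by (rule lin_nonneg_zero)
  have "Re x = 0" using r ii i0 by simp
  moreover have "Im x = 0" using im i1 i0 by simp
  ultimately show ?thesis by (simp add: complex_eq_iff)
qed

lemma psd_carrier: "psd d M \<Longrightarrow> M \<in> carrier_mat d d" unfolding psd_def by simp

lemma psd_diag:
  assumes "psd d M" "i < d"
  shows "Im (M $$ (i,i)) = 0 \<and> 0 \<le> Re (M $$ (i,i))"
proof -
  define v where "v = vec d (\<lambda>k. if k = i then (1::complex) else 0)"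
  have vc: "v \<in> carrier_vec d" unfolding v_def by simp
  have "(\<Sum>k<d. \<Sum>l<d. cnj (v $ k) * M $$ (k,l) * v $ l) = (\<Sum>k<d. if k = i then M $$ (i,i) else 0)"
  proof (intro sum.cong refl)
    fix k assume k: "k \<in> {..<d}"
    have "(\<Sum>l<d. cnj (v $ k) * M $$ (k,l) * v $ l) = (\<Sum>l<d. if l = i then cnj (v $ k) * M $$ (k,i) else 0)"
      by (intro sum.cong refl) (auto simp: v_def)
    also have "\<dots> = cnj (v $ k) * M $$ (k,i)" by (rule sum_one_pt[OF assms(2)])
    finally show "(\<Sum>l<d. cnj (v $ k) * M $$ (k,l) * v $ l) = (if k = i then M $$ (i,i) else 0)"
      using k by (auto simp: v_def)
  qed
  also have "\<dots> = M $$ (i,i)" by (rule sum_one_pt[OF assms(2)])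
  finally have eq: "(\<Sum>k<d. \<Sum>l<d. cnj (v $ k) * M $$ (k,l) * v $ l) = M $$ (i,i)" .
  have "let q = (\<Sum>k<d. \<Sum>l<d. cnj (v $ k) * M $$ (k,l) * v $ l) in Im q = 0 \<and> Re q \<ge> 0"
    using assms(1) vc unfolding psd_def by blast
  then show ?thesis unfolding Let_def eq .
qed

lemma psd_offdiag_zero:
  assumes "psd d M" "i < d" "j < d" "i \<noteq> j" "M $$ (i,i) = 0"
  shows "M $$ (i,j) = 0"
proof (rule cplx_zero)
  fix t :: complex
  define v where "v = vec d (\<lambda>k. if k = i then t else if k = j then 1 else 0)"
  have vc: "v \<in> carrier_vec d" unfolding v_def by simp
  have "(\<Sum>k<d. \<Sum>l<d. cnj (v $ k) * M $$ (k,l) * v $ l) =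
        (\<Sum>k<d. if k = i then cnj t * (t * M $$ (i,i) + M $$ (i,j)) else if k = j then t * M $$ (j,i) + M $$ (j,j) else 0)"
  proof (intro sum.cong refl)
    fix k assume k: "k \<in> {..<d}"
    have "(\<Sum>l<d. cnj (v $ k) * M $$ (k,l) * v $ l) =
          (\<Sum>l<d. if l = i then cnj (v $ k) * M $$ (k,i) * t else if l = j then cnj (v $ k) * M $$ (k,j) else 0)"
      by (intro sum.cong refl) (auto simp: v_def)
    also have "\<dots> = cnj (v $ k) * M $$ (k,i) * t + cnj (v $ k) * M $$ (k,j)" by (rule sum_two_pts[OF assms(2-4)])
    finally show "(\<Sum>l<d. cnj (v $ k) * M $$ (k,l) * v $ l) =
       (if k = i then cnj t * (t * M $$ (i,i) + M $$ (i,j)) else if k = j then t * M $$ (j,i) + M $$ (j,j) else 0)"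
      using k assms(4) by (cases "k = i"; cases "k = j") (simp_all add: v_def ring_distribs mult.assoc)
  qed
  also have "\<dots> = cnj t * (t * M $$ (i,i) + M $$ (i,j)) + (t * M $$ (j,i) + M $$ (j,j))"
    by (rule sum_two_pts[OF assms(2-4)])
  also have "\<dots> = cnj t * M $$ (i,j) + t * M $$ (j,i) + M $$ (j,j)" using assms(5) by (simp add: algebra_simps)
  finally have eq: "(\<Sum>k<d. \<Sum>l<d. cnj (v $ k) * M $$ (k,l) * v $ l) = cnj t * M $$ (i,j) + t * M $$ (j,i) + M $$ (j,j)" .
  show "Im (cnj t * M $$ (i,j) + t * M $$ (j,i) + M $$ (j,j)) = 0 \<and> 0 \<le> Re (cnj t * M $$ (i,j) + t * M $$ (j,i) + M $$ (j,j))"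
  proof -
    have "let q = (\<Sum>k<d. \<Sum>l<d. cnj (v $ k) * M $$ (k,l) * v $ l) in Im q = 0 \<and> Re q \<ge> 0"
      using assms(1) vc unfolding psd_def by blast
    then show ?thesis unfolding Let_def eq .
  qed
qed



lemma psd_sub:
  fixes s :: real and h :: "nat \<Rightarrow> nat"
  assumes M: "psd m M" and Nc: "N \<in> carrier_mat n n" and s: "s \<ge> 0"
    and N: "\<And>r c. r < n \<Longrightarrow> c < n \<Longrightarrow> N $$ (r,c) = (if r \<in> S \<and> c \<in> S then complex_of_real s * M $$ (h r, h c) else 0)"
    and inj: "inj_on h ({..<n} \<inter> S)" and hm: "\<And>r. r < n \<Longrightarrow> r \<in> S \<Longrightarrow> h r < m"
  shows "psd n N"
  unfolding psd_def Let_def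
proof (intro conjI ballI)
  show "N \<in> carrier_mat n n" by (rule Nc)
  fix v :: "complex vec" assume v: "v \<in> carrier_vec n"
  define T where "T = {..<n} \<inter> S"
  have fT: "finite T" unfolding T_def by simp
  have X: "(\<Sum>c\<in>T. g c) = (\<Sum>c<n. if c \<in> S then g c else 0)" for g :: "nat \<Rightarrow> complex"
    unfolding T_def by (rule sum.inter_restrict) simp
  define w where "w = vec m (\<lambda>i. if i \<in> h ` T then v $ (the_inv_into T h i) else 0)"
  have wc: "w \<in> carrier_vec m" unfolding w_def by simp
  have hT: "h ` T \<subseteq> {..<m}" using hm unfolding T_def by auto
  have injT: "inj_on h T" using inj unfolding T_def .
  have wv: "w $ (h r) = v $ r" if "r \<in> T" for r
    using that hT injT unfolding w_def by (auto simp: the_inv_into_f_f)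
  have w0: "w $ i = 0" if "i < m" "i \<notin> h ` T" for i using that unfolding w_def by simp
  let ?g = "\<lambda>r c. cnj (v $ r) * M $$ (h r, h c) * v $ c"
  have "(\<Sum>r<n. \<Sum>c<n. cnj (v $ r) * N $$ (r,c) * v $ c) =
        (\<Sum>r<n. if r \<in> S then (\<Sum>c<n. if c \<in> S then complex_of_real s * ?g r c else 0) else 0)"
    by (intro sum.cong refl) (auto simp: N intro!: sum.cong)
  also have "\<dots> = (\<Sum>r<n. if r \<in> S then (\<Sum>c\<in>T. complex_of_real s * ?g r c) else 0)"
    by (simp only: X)
  also have "\<dots> = (\<Sum>r\<in>T. \<Sum>c\<in>T. complex_of_real s * ?g r c)"
    by (simp only: X)
  also have "\<dots> = complex_of_real s * (\<Sum>r\<in>T. \<Sum>c\<in>T. ?g r c)" by (simp add: sum_distrib_left)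
  finally have eqN: "(\<Sum>r<n. \<Sum>c<n. cnj (v $ r) * N $$ (r,c) * v $ c) = complex_of_real s * (\<Sum>r\<in>T. \<Sum>c\<in>T. ?g r c)" .
  let ?f = "\<lambda>i j. cnj (w $ i) * M $$ (i,j) * w $ j"
  have "(\<Sum>i<m. \<Sum>j<m. ?f i j) = (\<Sum>i<m. \<Sum>j\<in>h`T. ?f i j)"
  proof (rule sum.cong[OF refl])
    fix i assume "i \<in> {..<m}"
    show "(\<Sum>j<m. ?f i j) = (\<Sum>j\<in>h`T. ?f i j)"
      by (rule sum.mono_neutral_right) (use hT w0 in auto)
  qed
  also have "\<dots> = (\<Sum>i\<in>h`T. \<Sum>j\<in>h`T. ?f i j)"
    by (rule sum.mono_neutral_right) (use hT w0 in auto)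
  also have "\<dots> = (\<Sum>r\<in>T. \<Sum>c\<in>T. ?f (h r) (h c))"
    by (simp add: sum.reindex[OF injT])
  also have "\<dots> = (\<Sum>r\<in>T. \<Sum>c\<in>T. ?g r c)"
    by (intro sum.cong refl) (simp add: wv)
  finally have eqM: "(\<Sum>i<m. \<Sum>j<m. ?f i j) = (\<Sum>r\<in>T. \<Sum>c\<in>T. ?g r c)" .
  have "let q = (\<Sum>i<m. \<Sum>j<m. ?f i j) in Im q = 0 \<and> Re q \<ge> 0"
    using M wc unfolding psd_def by blast
  then have P: "Im (\<Sum>r\<in>T. \<Sum>c\<in>T. ?g r c) = 0" "Re (\<Sum>r\<in>T. \<Sum>c\<in>T. ?g r c) \<ge> 0"
    unfolding Let_def eqM by auto
  show "Im (\<Sum>r<n. \<Sum>c<n. cnj (v $ r) * N $$ (r,c) * v $ c) = 0" unfolding eqN using P by simp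
  show "0 \<le> Re (\<Sum>r<n. \<Sum>c<n. cnj (v $ r) * N $$ (r,c) * v $ c)" unfolding eqN using P s by simp
qed



lemma sum_ivl_shift: "sum f {c..<c+k} = (\<Sum>b<k. f (c+b::nat))"
  by (induction k) (simp_all add: add.commute)

lemma sum_split_mult:
  fixes f :: "nat \<Rightarrow> 'a::comm_monoid_add"
  shows "(\<Sum>r<dA*dB. f r) = (\<Sum>a<dA. \<Sum>b<dB. f (a*dB+b))"
  using sum.nat_group[of f dB dA, symmetric] by (simp add: sum_ivl_shift)

lemma idx_lt: "a < dA \<Longrightarrow> b < dB \<Longrightarrow> a*dB + b < dA*(dB::nat)"
proof -
  assume "a < dA" "b < dB"
  then have "a*dB + b < Suc a * dB" by simp
  also have "\<dots> \<le> dA * dB" using \<open>a < dA\<close> by (intro mult_le_mono1) simp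
  finally show ?thesis .
qed



lemma divmod_aux:
  fixes q x D :: nat
  assumes "x < D"
  shows "(q*D + x) div D = q" "(q*D + x) mod D = x"
proof -
  have D: "D \<noteq> 0" using assms by simp
  show "(q*D + x) div D = q" using div_mult_self3[OF D, of q x] assms by simp
  show "(q*D + x) mod D = x" using mod_mult_self3[of q D x] assms by simp
qed

theorem proposition1:
  fixes X Y A B :: sys
  assumes "valid_sys X" and "valid_sys Y" and "valid_sys A" and "valid_sys B"
    and "snd X = TI" and "snd A = TC"
  shows "T_trivial X Y A B"
  unfolding T_trivial_def
proof (intro allI impI)
  fix R assume res: "is_resource X Y A B R"
  have dX: "fst X = 1" using assms(1,5) unfolding valid_sys_def by simp
  define dY where "dY = fst Y"
  define dA where "dA = fst A"
  define dB where "dB = fst B"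
  have dY1: "dY \<ge> 1" and dA1: "dA \<ge> 1" and dB1: "dB \<ge> 1"
    using assms(2-4) unfolding valid_sys_def dY_def dA_def dB_def by auto
  note U = is_resource_def Let_def dX dY_def[symmetric] dA_def[symmetric] dB_def[symmetric]
  have L0: "linear_map (1*dY) (dA*dB) R" using res unfolding U by (elim conjE) assumption
  have C0: "CP (1*dY) (dA*dB) R" using res unfolding U by (elim conjE) assumption
  have L: "linear_map dY (dA*dB) R" using L0 by simp
  have C: "CP dY (dA*dB) R" using C0 by simp
  have TR0: "\<forall>\<xi> \<psi>. density 1 \<xi> \<and> density dY \<psi> \<longrightarrow> tr (R (tensor_mat 1 dY \<xi> \<psi>)) = 1"
    using res unfolding U by (elim conjE) assumption
  have NS0: "\<forall>\<xi> \<psi> \<psi>'. density 1 \<xi> \<and> density dY \<psi> \<and> density dY \<psi>' \<longrightarrow>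
        ptrace_second dA dB (R (tensor_mat 1 dY \<xi> \<psi>)) = ptrace_second dA dB (R (tensor_mat 1 dY \<xi> \<psi>'))"
    using res unfolding U by (elim conjE) assumption
  have CA0: "snd A = TC \<longrightarrow> (\<forall>\<xi> \<psi>. density 1 \<xi> \<and> density dY \<psi> \<longrightarrow>
        (\<forall>i<dA. \<forall>j<dA. i \<noteq> j \<longrightarrow> (\<forall>b<dB. \<forall>b'<dB.
           R (tensor_mat 1 dY \<xi> \<psi>) $$ (i*dB+b, j*dB+b') = 0)))"
    using res unfolding U by (elim conjE) assumption
  have CB0: "snd B = TC \<longrightarrow> (\<forall>\<xi> \<psi>. density 1 \<xi> \<and> density dY \<psi> \<longrightarrow>
        (\<forall>i<dB. \<forall>j<dB. i \<noteq> j \<longrightarrow> (\<forall>a<dA. \<forall>a'<dA.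
           R (tensor_mat 1 dY \<xi> \<psi>) $$ (a*dB+i, a'*dB+j) = 0)))"
    using res unfolding U by (elim conjE) assumption
  have CY0: "snd Y = TC \<longrightarrow> (\<forall>\<xi>. density 1 \<xi> \<longrightarrow>
        (\<forall>i<dY. \<forall>j<dY. i \<noteq> j \<longrightarrow> R (tensor_mat 1 dY \<xi> (ketbra dY i j)) = 0\<^sub>m (dA*dB) (dA*dB)))"
    using res unfolding U by (elim conjE) assumption
  have TR: "\<And>\<xi> \<psi>. density 1 \<xi> \<Longrightarrow> density dY \<psi> \<Longrightarrow> tr (R (tensor_mat 1 dY \<xi> \<psi>)) = 1"
    using TR0 by blast
  have NS: "\<And>\<xi> \<psi> \<psi>'. density 1 \<xi> \<Longrightarrow> density dY \<psi> \<Longrightarrow> density dY \<psi>' \<Longrightarrow>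
      ptrace_second dA dB (R (tensor_mat 1 dY \<xi> \<psi>)) = ptrace_second dA dB (R (tensor_mat 1 dY \<xi> \<psi>'))"
    using NS0 by blast
  have CA: "\<And>\<xi> \<psi> i j b b'. density 1 \<xi> \<Longrightarrow> density dY \<psi> \<Longrightarrow> i < dA \<Longrightarrow> j < dA \<Longrightarrow> i \<noteq> j \<Longrightarrow> b < dB \<Longrightarrow> b' < dB \<Longrightarrow>
      R (tensor_mat 1 dY \<xi> \<psi>) $$ (i*dB+b, j*dB+b') = 0"
    using CA0 assms(6) by blast
  have CB: "\<And>\<xi> \<psi> i j a a'. snd B = TC \<Longrightarrow> density 1 \<xi> \<Longrightarrow> density dY \<psi> \<Longrightarrow> i < dB \<Longrightarrow> j < dB \<Longrightarrow> i \<noteq> j \<Longrightarrow> a < dA \<Longrightarrow> a' < dA \<Longrightarrow>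
      R (tensor_mat 1 dY \<xi> \<psi>) $$ (a*dB+i, a'*dB+j) = 0"
    using CB0 by blast
  have CY: "\<And>\<xi> i j. snd Y = TC \<Longrightarrow> density 1 \<xi> \<Longrightarrow> i < dY \<Longrightarrow> j < dY \<Longrightarrow> i \<noteq> j \<Longrightarrow>
      R (tensor_mat 1 dY \<xi> (ketbra dY i j)) = 0\<^sub>m (dA*dB) (dA*dB)"
    using CY0 by blast
  define \<xi>1 where "\<xi>1 = (1\<^sub>m 1 :: complex mat)"
  have d\<xi>1: "density 1 \<xi>1"
  proof -
    have "\<xi>1 = ketbra 1 0 0" unfolding \<xi>1_def ketbra_def by (intro eq_matI) auto
    then show ?thesis using ketbra_density[of 0 1] by simp
  qed
  have tens: "tensor_mat 1 dY \<xi>1 \<psi> = \<psi>" if "\<psi> \<in> carrier_mat dY dY" for \<psi>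
    unfolding tensor_mat_def \<xi>1_def using that by (intro eq_matI) auto
  have dcar: "\<psi> \<in> carrier_mat dY dY" if "density dY \<psi>" for \<psi>
    using that unfolding density_def psd_def by simp
  have kcar: "ketbra d i j \<in> carrier_mat d d" for d i j unfolding ketbra_def by simp
  have TR': "tr (R \<psi>) = 1" if "density dY \<psi>" for \<psi> using TR[OF d\<xi>1 that] tens[OF dcar[OF that]] by simp
  have NS': "ptrace_second dA dB (R \<psi>) = ptrace_second dA dB (R \<psi>')" if "density dY \<psi>" "density dY \<psi>'" for \<psi> \<psi>'
    using NS[OF d\<xi>1 that] tens[OF dcar[OF that(1)]] tens[OF dcar[OF that(2)]] by simp
  have CA': "R \<psi> $$ (i*dB+b, j*dB+b') = 0"
    if "density dY \<psi>" "i < dA" "j < dA" "i \<noteq> j" "b < dB" "b' < dB" for \<psi> i j b b'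
    using CA[OF d\<xi>1 that] tens[OF dcar[OF that(1)]] by simp
  have CB': "R \<psi> $$ (a*dB+i, a*dB+j) = 0"
    if "snd B = TC" "density dY \<psi>" "i < dB" "j < dB" "i \<noteq> j" "a < dA" for \<psi> i j a
    using CB[OF that(1) d\<xi>1 that(2-6) that(6)] tens[OF dcar[OF that(2)]] by simp
  have CY': "R (ketbra dY i j) = 0\<^sub>m (dA*dB) (dA*dB)"
    if "snd Y = TC" "i < dY" "j < dY" "i \<noteq> j" for i j
    using CY[OF that(1) d\<xi>1 that(2-4)] tens[OF kcar] by simp
  have Lc: "R M \<in> carrier_mat (dA*dB) (dA*dB)" if "M \<in> carrier_mat dY dY" for M
    using L that unfolding linear_map_def by blast
  have Ladd: "R (M + N) = R M + R N" if "M \<in> carrier_mat dY dY" "N \<in> carrier_mat dY dY" for M N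
    using L that unfolding linear_map_def by blast
  have Lsmul: "R (c \<cdot>\<^sub>m M) = c \<cdot>\<^sub>m R M" if "M \<in> carrier_mat dY dY" for c M
    using L that unfolding linear_map_def by blast
  have Fadd: "R (M + N) $$ (r,c) = R M $$ (r,c) + R N $$ (r,c)"
    if "M \<in> carrier_mat dY dY" "N \<in> carrier_mat dY dY" "r < dA*dB" "c < dA*dB" for M N r c
    using Ladd[OF that(1,2)] Lc[OF that(2)] that(3,4) by simp
  have Fsmul: "R (x \<cdot>\<^sub>m M) $$ (r,c) = x * R M $$ (r,c)"
    if "M \<in> carrier_mat dY dY" "r < dA*dB" "c < dA*dB" for x M r c
    using Lsmul[OF that(1)] Lc[OF that(1)] that(2,3) by simp
  have psdR: "psd (dA*dB) (R \<psi>)" if "density dY \<psi>" for \<psi>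
  proof -
    have "psd (1*dY) \<psi>" using that unfolding density_def by simp
    then have p: "psd (1*(dA*dB)) (ampl 1 dY (dA*dB) R \<psi>)" using C unfolding CP_def by blast
    have sub: "mat dY dY (\<lambda>(s,t). \<psi> $$ (0*dY+s, 0*dY+t)) = \<psi>"
      using dcar[OF that] by (intro eq_matI) auto
    have "ampl 1 dY (dA*dB) R \<psi> = R \<psi>"
      unfolding ampl_def using Lc[OF dcar[OF that]] sub by (intro eq_matI) auto
    then show ?thesis using p by simp
  qed
  have Fadd': "(\<lambda>M. R M $$ (r,c)) (M + N) = (\<lambda>M. R M $$ (r,c)) M + (\<lambda>M. R M $$ (r,c)) N"
    if "r < dA*dB" "c < dA*dB" "M \<in> carrier_mat dY dY" "N \<in> carrier_mat dY dY" for M N r c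
    using Fadd that by simp
  have Fsmul': "(\<lambda>M. R M $$ (r,c)) (x \<cdot>\<^sub>m M) = x * (\<lambda>M. R M $$ (r,c)) M"
    if "r < dA*dB" "c < dA*dB" "M \<in> carrier_mat dY dY" for M x r c
    using Fsmul that by simp
  have expR: "R M $$ (r,c) = (\<Sum>i<dY. \<Sum>j<dY. M $$ (i,j) * R (ketbra dY i j) $$ (r,c))"
    if "M \<in> carrier_mat dY dY" "r < dA*dB" "c < dA*dB" for M r c
    using expand_functional[where F = "\<lambda>M. R M $$ (r,c)", OF Fadd'[OF that(2,3)] Fsmul'[OF that(2,3)] that(1)] by simp
  have spanR: "R M $$ (r,c) = 0"
    if "M \<in> carrier_mat dY dY" "r < dA*dB" "c < dA*dB" "\<And>\<psi>. density dY \<psi> \<Longrightarrow> R \<psi> $$ (r,c) = 0" for M r c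
    using span_density[where F = "\<lambda>M. R M $$ (r,c)", OF Fadd'[OF that(2,3)] Fsmul'[OF that(2,3)] _ that(1)] that(4) by simp
  have offblock: "R M $$ (r,c) = 0"
    if "M \<in> carrier_mat dY dY" "r < dA*dB" "c < dA*dB" "r div dB \<noteq> c div dB" for M r c
  proof (rule spanR[OF that(1-3)])
    fix \<psi> assume d: "density dY \<psi>"
    have "r div dB < dA" "c div dB < dA" using that(2,3) by (simp_all add: less_mult_imp_div_less)
    moreover have "r mod dB < dB" "c mod dB < dB" using dB1 by simp_all
    ultimately have "R \<psi> $$ ((r div dB)*dB + r mod dB, (c div dB)*dB + c mod dB) = 0"
      using CA'[OF d] that(4) by blast
    then show "R \<psi> $$ (r,c) = 0" by simp
  qed
  define \<psi>0 where "\<psi>0 = ketbra dY 0 0"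
  have d\<psi>0: "density dY \<psi>0" unfolding \<psi>0_def using ketbra_density dY1 by simp
  define P where "P a = Re (\<Sum>b<dB. R \<psi>0 $$ (a*dB+b, a*dB+b))" for a
  have diagR: "Im (R \<psi> $$ (r,r)) = 0 \<and> 0 \<le> Re (R \<psi> $$ (r,r))" if "density dY \<psi>" "r < dA*dB" for \<psi> r
    using psd_diag[OF psdR[OF that(1)] that(2)] .
  have Pnn: "P a \<ge> 0" if "a < dA" for a
    unfolding P_def Re_sum using diagR[OF d\<psi>0] idx_lt[OF that] by (intro sum_nonneg) auto
  have Pcplx: "(\<Sum>b<dB. R \<psi>0 $$ (a*dB+b, a*dB+b)) = complex_of_real (P a)" if "a < dA" for a
  proof -
    have "Im (\<Sum>b<dB. R \<psi>0 $$ (a*dB+b, a*dB+b)) = 0"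
      unfolding Im_sum using diagR[OF d\<psi>0] idx_lt[OF that] by (intro sum.neutral) auto
    then show ?thesis unfolding P_def by (simp add: complex_eq_iff)
  qed
  have Pdens: "(\<Sum>b<dB. R \<psi> $$ (a*dB+b, a*dB+b)) = complex_of_real (P a)" if "density dY \<psi>" "a < dA" for \<psi> a
  proof -
    have "ptrace_second dA dB (R \<psi>) $$ (a,a) = ptrace_second dA dB (R \<psi>0) $$ (a,a)"
      using NS'[OF that(1) d\<psi>0] by simp
    then have "(\<Sum>b<dB. R \<psi> $$ (a*dB+b, a*dB+b)) = (\<Sum>b<dB. R \<psi>0 $$ (a*dB+b, a*dB+b))"
      unfolding ptrace_second_def using that(2) by simp
    then show ?thesis using Pcplx[OF that(2)] by simp
  qed
  have Psum: "(\<Sum>a<dA. P a) = 1"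
  proof -
    have "tr (R \<psi>0) = (\<Sum>r<dA*dB. R \<psi>0 $$ (r,r))" unfolding tr_def using Lc[OF dcar[OF d\<psi>0]] by simp
    also have "\<dots> = (\<Sum>a<dA. \<Sum>b<dB. R \<psi>0 $$ (a*dB+b, a*dB+b))" by (rule sum_split_mult)
    also have "\<dots> = (\<Sum>a<dA. complex_of_real (P a))" by (intro sum.cong refl) (simp add: Pcplx)
    finally have "complex_of_real (\<Sum>a<dA. P a) = 1" using TR'[OF d\<psi>0] by simp
    then show ?thesis by (simp add: complex_eq_iff)
  qed
  have zdiag: "R \<psi> $$ (a*dB+b, a*dB+b) = 0" if "density dY \<psi>" "a < dA" "P a = 0" "b < dB" for \<psi> a b
  proof -
    have nn: "\<And>b'. b' \<in> {..<dB} \<Longrightarrow> 0 \<le> Re (R \<psi> $$ (a*dB+b', a*dB+b'))"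
      using diagR[OF that(1)] idx_lt[OF that(2)] by auto
    have "(\<Sum>b<dB. Re (R \<psi> $$ (a*dB+b, a*dB+b))) = 0"
      using Pdens[OF that(1,2)] that(3) by (metis Re_sum zero_complex.simps(1) of_real_0)
    then have "\<forall>b'\<in>{..<dB}. Re (R \<psi> $$ (a*dB+b', a*dB+b')) = 0"
      using sum_nonneg_eq_0_iff[of "{..<dB}" "\<lambda>b'. Re (R \<psi> $$ (a*dB+b', a*dB+b'))"] nn by simp
    then have "Re (R \<psi> $$ (a*dB+b, a*dB+b)) = 0" using that(4) by simp
    moreover have "Im (R \<psi> $$ (a*dB+b, a*dB+b)) = 0" using diagR[OF that(1) idx_lt[OF that(2,4)]] by simp
    ultimately show ?thesis by (simp add: complex_eq_iff)
  qed
  have zblock: "R M $$ (r,c) = 0"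
    if "M \<in> carrier_mat dY dY" "r < dA*dB" "c < dA*dB" "r div dB = c div dB" "P (r div dB) = 0" for M r c
  proof (rule spanR[OF that(1-3)])
    fix \<psi> assume d: "density dY \<psi>"
    have a: "r div dB < dA" using that(2) by (simp add: less_mult_imp_div_less)
    have rr: "R \<psi> $$ (r,r) = 0"
      using zdiag[OF d a that(5), of "r mod dB"] dB1 by simp
    show "R \<psi> $$ (r,c) = 0"
    proof (cases "r = c")
      case True then show ?thesis using rr by simp
    next
      case False show ?thesis using psd_offdiag_zero[OF psdR[OF d] that(2,3) False rr] .
    qed
  qed
  have trblock: "(\<Sum>b<dB. R M $$ (a*dB+b, a*dB+b)) = complex_of_real (P a) * tr M"
    if "M \<in> carrier_mat dY dY" "a < dA" for M a
  proof -
    let ?F = "\<lambda>M. (\<Sum>b<dB. R M $$ (a*dB+b, a*dB+b)) - complex_of_real (P a) * tr M"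
    have ix: "a*dB+b < dA*dB" if "b < dB" for b using idx_lt[OF \<open>a < dA\<close> that] .
    have tradd: "tr (M + N) = tr M + tr N" if "M \<in> carrier_mat dY dY" "N \<in> carrier_mat dY dY" for M N
      unfolding tr_def using that by (simp add: sum.distrib)
    have trsmul: "tr (x \<cdot>\<^sub>m M) = x * tr M" if "M \<in> carrier_mat dY dY" for x M
      unfolding tr_def using that by (simp add: sum_distrib_left)
    have "?F M = 0"
    proof (rule span_density[where F = ?F and d = dY, OF _ _ _ that(1)])
      fix M N :: "complex mat" assume "M \<in> carrier_mat dY dY" "N \<in> carrier_mat dY dY"
      then show "?F (M + N) = ?F M + ?F N"
        using Fadd ix tradd by (simp add: sum.distrib algebra_simps)
    next
      fix x and M :: "complex mat" assume "M \<in> carrier_mat dY dY"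
      then show "?F (x \<cdot>\<^sub>m M) = x * ?F M"
        using Fsmul ix trsmul by (simp add: sum_distrib_left algebra_simps)
    next
      fix \<psi> assume "density dY \<psi>"
      then show "?F \<psi> = 0" using Pdens[OF _ that(2)] unfolding density_def by simp
    qed
    then show ?thesis by simp
  qed
  obtain a0 where a0: "a0 < dA" "P a0 > 0"
  proof -
    have "\<exists>a<dA. P a > 0"
    proof (rule ccontr)
      assume "\<not> (\<exists>a<dA. P a > 0)"
      then have "(\<Sum>a<dA. P a) \<le> 0" by (intro sum_nonpos) auto
      then show False using Psum by simp
    qed
    then show ?thesis using that by blast
  qed
  define sel where "sel a = (if P a > 0 then a else a0)" for a
  have sel: "sel a < dA" "P (sel a) > 0" if "a < dA" for a
    unfolding sel_def using a0 that by auto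
  define RB where "RB a M = mat dB dB (\<lambda>(b,b'). R M $$ (a*dB+b, a*dB+b') / complex_of_real (P a))" for a M
  define RA where "RA a M = mat dA dA (\<lambda>(i,j). if i = a \<and> j = a then M $$ (0,0) else (0::complex))" for a M
  have singB: "is_single Y B (RB a)" if a: "a < dA" "P a > 0" for a
    unfolding is_single_def Let_def dY_def[symmetric] dB_def[symmetric]
  proof (intro conjI)
    have ix: "a*dB+b < dA*dB" if "b < dB" for b using idx_lt[OF a(1) that] .
    show "linear_map dY dB (RB a)"
      unfolding linear_map_def
    proof (intro conjI ballI allI)
      fix M :: "complex mat" assume "M \<in> carrier_mat dY dY"
      show "RB a M \<in> carrier_mat dB dB" unfolding RB_def by simp
    next
      fix M N :: "complex mat" assume MN: "M \<in> carrier_mat dY dY" "N \<in> carrier_mat dY dY"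
      show "RB a (M + N) = RB a M + RB a N"
        unfolding RB_def by (intro eq_matI) (auto simp: Fadd[OF MN] ix add_divide_distrib)
    next
      fix x and M :: "complex mat" assume M: "M \<in> carrier_mat dY dY"
      show "RB a (x \<cdot>\<^sub>m M) = x \<cdot>\<^sub>m RB a M"
        unfolding RB_def by (intro eq_matI) (auto simp: Fsmul[OF M] ix)
    qed
    show "CP dY dB (RB a)"
      unfolding CP_def
    proof (intro allI impI)
      fix k :: nat and M :: "complex mat"
      assume k: "1 \<le> k" and pM: "psd (k*dY) M"
      have pM': "psd (k*(dA*dB)) (ampl k dY (dA*dB) R M)" using C k pM unfolding CP_def by blast
      define h where "h r = (r div dB)*(dA*dB) + (a*dB + r mod dB)" for r
      have hx: "a*dB + r mod dB < dA*dB" for r using ix dB1 by simp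
      have hdiv: "h r div (dA*dB) = r div dB" for r unfolding h_def using divmod_aux(1)[OF hx[of r]] .
      have hmod: "h r mod (dA*dB) = a*dB + r mod dB" for r unfolding h_def using divmod_aux(2)[OF hx[of r]] .
      have hk: "h r < k*(dA*dB)" if "r < k*dB" for r
      proof -
        have q: "r div dB < k" using that by (simp add: less_mult_imp_div_less)
        have "h r < Suc (r div dB) * (dA*dB)" unfolding h_def using hx[of r] by simp
        also have "\<dots> \<le> k*(dA*dB)" using q by (intro mult_le_mono1) simp
        finally show ?thesis .
      qed
      show "psd (k*dB) (ampl k dY dB (RB a) M)"
      proof (rule psd_sub[OF pM', where S = UNIV and h = h and s = "1 / P a"])
        show "ampl k dY dB (RB a) M \<in> carrier_mat (k*dB) (k*dB)" unfolding ampl_def by simp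
        show "0 \<le> 1 / P a" using a by simp
        fix r c assume rc: "r < k*dB" "c < k*dB"
        show "ampl k dY dB (RB a) M $$ (r,c) = (if r \<in> UNIV \<and> c \<in> UNIV then complex_of_real (1 / P a) * ampl k dY (dA*dB) R M $$ (h r, h c) else 0)"
          using rc hk[OF rc(1)] hk[OF rc(2)] dB1
          by (simp add: ampl_def RB_def hdiv hmod divide_inverse mult.commute of_real_inverse)
      next
        show "inj_on h ({..<k*dB} \<inter> UNIV)"
        proof (rule inj_onI)
          fix r r' assume "h r = h r'"
          then have "h r div (dA*dB) = h r' div (dA*dB)" "h r mod (dA*dB) = h r' mod (dA*dB)" by simp_all
          then have "r div dB = r' div dB" "r mod dB = r' mod dB" unfolding hdiv hmod by simp_all
          then show "r = r'" by (metis div_mult_mod_eq)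
        qed
      next
        fix r assume "r < k*dB" then show "h r < k*(dA*dB)" by (rule hk)
      qed
    qed
    show "\<forall>M\<in>carrier_mat dY dY. tr (RB a M) = tr M"
    proof
      fix M :: "complex mat" assume M: "M \<in> carrier_mat dY dY"
      have "tr (RB a M) = (\<Sum>b<dB. R M $$ (a*dB+b, a*dB+b)) / complex_of_real (P a)"
        unfolding tr_def RB_def by (simp add: sum_divide_distrib)
      also have "\<dots> = tr M" using trblock[OF M a(1)] a(2) by simp
      finally show "tr (RB a M) = tr M" .
    qed
    show "snd B = TC \<longrightarrow> (\<forall>\<xi>. density dY \<xi> \<longrightarrow> (\<forall>i<dB. \<forall>j<dB. i \<noteq> j \<longrightarrow> RB a \<xi> $$ (i,j) = 0))"
      using CB' a(1) unfolding RB_def by auto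
    show "snd Y = TC \<longrightarrow> (\<forall>i<dY. \<forall>j<dY. i \<noteq> j \<longrightarrow> RB a (ketbra dY i j) = 0\<^sub>m dB dB)"
    proof (intro impI allI)
      fix i j assume Y: "snd Y = TC" and ij: "i < dY" "j < dY" "i \<noteq> j"
      show "RB a (ketbra dY i j) = 0\<^sub>m dB dB"
        unfolding RB_def using CY'[OF Y ij] ix by (intro eq_matI) auto
    qed
  qed
  have singA: "is_single X A (RA a)" if a: "a < dA" for a
    unfolding is_single_def Let_def dX dA_def[symmetric]
  proof (intro conjI)
    show "linear_map 1 dA (RA a)"
      unfolding linear_map_def
    proof (intro conjI ballI allI)
      fix M :: "complex mat" assume "M \<in> carrier_mat 1 1"
      show "RA a M \<in> carrier_mat dA dA" unfolding RA_def by simp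
    next
      fix M N :: "complex mat" assume MN: "M \<in> carrier_mat 1 1" "N \<in> carrier_mat 1 1"
      show "RA a (M + N) = RA a M + RA a N"
        unfolding RA_def using MN by (intro eq_matI) auto
    next
      fix x and M :: "complex mat" assume M: "M \<in> carrier_mat 1 1"
      show "RA a (x \<cdot>\<^sub>m M) = x \<cdot>\<^sub>m RA a M"
        unfolding RA_def using M by (intro eq_matI) auto
    qed
    show "CP 1 dA (RA a)"
      unfolding CP_def
    proof (intro allI impI)
      fix k :: nat and M :: "complex mat"
      assume k: "1 \<le> k" and pM: "psd (k*1) M"
      show "psd (k*dA) (ampl k 1 dA (RA a) M)"
      proof (rule psd_sub[OF pM, where S = "{r. r mod dA = a}" and h = "\<lambda>r. r div dA" and s = 1])
        show "ampl k 1 dA (RA a) M \<in> carrier_mat (k*dA) (k*dA)" unfolding ampl_def by simp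
        fix r c assume rc: "r < k*dA" "c < k*dA"
        show "ampl k 1 dA (RA a) M $$ (r,c) = (if r \<in> {r. r mod dA = a} \<and> c \<in> {r. r mod dA = a}
            then complex_of_real 1 * M $$ (r div dA, c div dA) else 0)"
          using rc dA1 by (simp add: ampl_def RA_def)
      next
        show "inj_on (\<lambda>r. r div dA) ({..<k*dA} \<inter> {r. r mod dA = a})"
        proof (rule inj_onI)
          fix r r' assume "r \<in> {..<k*dA} \<inter> {r. r mod dA = a}" "r' \<in> {..<k*dA} \<inter> {r. r mod dA = a}"
            "r div dA = r' div dA"
          then show "r = r'" by (metis IntD2 div_mult_mod_eq mem_Collect_eq)
        qed
      next
        fix r assume "r < k*dA" then show "r div dA < k*1" by (simp add: less_mult_imp_div_less)
      qed simp
    qed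
    show "\<forall>M\<in>carrier_mat 1 1. tr (RA a M) = tr M"
    proof
      fix M :: "complex mat" assume M: "M \<in> carrier_mat 1 1"
      have "tr (RA a M) = (\<Sum>i<dA. if i = a then M $$ (0,0) else 0)"
        unfolding tr_def RA_def by (intro sum.cong) auto
      also have "\<dots> = M $$ (0,0)" by (rule sum_one_pt[OF a])
      also have "\<dots> = tr M" unfolding tr_def using M by simp
      finally show "tr (RA a M) = tr M" .
    qed
    show "snd A = TC \<longrightarrow> (\<forall>\<xi>. density 1 \<xi> \<longrightarrow> (\<forall>i<dA. \<forall>j<dA. i \<noteq> j \<longrightarrow> RA a \<xi> $$ (i,j) = 0))"
      unfolding RA_def by auto
    show "snd X = TC \<longrightarrow> (\<forall>i<1. \<forall>j<1. i \<noteq> j \<longrightarrow> RA a (ketbra 1 i j) = 0\<^sub>m dA dA)"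
      by auto
  qed
  have TM: "tensor_map 1 dY dA dB (RA i) (RB (sel i)) M $$ (r,c) =
      (if r div dB = i \<and> c div dB = i then R M $$ (sel i*dB + r mod dB, sel i*dB + c mod dB) / complex_of_real (P (sel i)) else 0)"
    if M: "M \<in> carrier_mat dY dY" and i: "i < dA" and rc: "r < dA*dB" "c < dA*dB" for M i r c
  proof -
    define s where "s = sel i"
    have s: "s < dA" unfolding s_def using sel[OF i] by simp
    have rd: "r div dB < dA" "c div dB < dA" using rc by (simp_all add: less_mult_imp_div_less)
    have rm: "r mod dB < dB" "c mod dB < dB" using dB1 by simp_all
    have ix: "s*dB + r mod dB < dA*dB" "s*dB + c mod dB < dA*dB" using idx_lt[OF s rm(1)] idx_lt[OF s rm(2)] .
    have RAk: "RA i (ketbra 1 0 0) $$ (r div dB, c div dB) = (if r div dB = i \<and> c div dB = i then 1 else 0)"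
      unfolding RA_def ketbra_def using rd by simp
    have RBk: "RB s (ketbra dY y y') $$ (r mod dB, c mod dB) = R (ketbra dY y y') $$ (s*dB + r mod dB, s*dB + c mod dB) / complex_of_real (P s)" for y y'
      unfolding RB_def using rm by simp
    have "tensor_map 1 dY dA dB (RA i) (RB s) M $$ (r,c) =
        (\<Sum>y<dY. \<Sum>y'<dY. M $$ (y, y') * RA i (ketbra 1 0 0) $$ (r div dB, c div dB) * RB s (ketbra dY y y') $$ (r mod dB, c mod dB))"
      unfolding tensor_map_def using rc by simp
    also have "\<dots> = (if r div dB = i \<and> c div dB = i then
        (\<Sum>y<dY. \<Sum>y'<dY. M $$ (y, y') * R (ketbra dY y y') $$ (s*dB + r mod dB, s*dB + c mod dB)) / complex_of_real (P s) else 0)"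
      unfolding RAk RBk by (simp add: sum_divide_distrib)
    also have "\<dots> = (if r div dB = i \<and> c div dB = i then R M $$ (s*dB + r mod dB, s*dB + c mod dB) / complex_of_real (P s) else 0)"
      using expR[OF M ix] by simp
    finally show ?thesis unfolding s_def .
  qed
  have eqn: "R M = mat (dA*dB) (dA*dB) (\<lambda>rc. \<Sum>i<dA. complex_of_real (P i) * tensor_map 1 dY dA dB (RA i) (RB (sel i)) M $$ rc)"
    if M: "M \<in> carrier_mat dY dY" for M
  proof (rule eq_matI)
    show "dim_row (R M) = dim_row (mat (dA*dB) (dA*dB) (\<lambda>rc. \<Sum>i<dA. complex_of_real (P i) * tensor_map 1 dY dA dB (RA i) (RB (sel i)) M $$ rc))"
      using Lc[OF M] by simp
    show "dim_col (R M) = dim_col (mat (dA*dB) (dA*dB) (\<lambda>rc. \<Sum>i<dA. complex_of_real (P i) * tensor_map 1 dY dA dB (RA i) (RB (sel i)) M $$ rc))"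
      using Lc[OF M] by simp
    fix r c assume "r < dim_row (mat (dA*dB) (dA*dB) (\<lambda>rc. \<Sum>i<dA. complex_of_real (P i) * tensor_map 1 dY dA dB (RA i) (RB (sel i)) M $$ rc))"
      "c < dim_col (mat (dA*dB) (dA*dB) (\<lambda>rc. \<Sum>i<dA. complex_of_real (P i) * tensor_map 1 dY dA dB (RA i) (RB (sel i)) M $$ rc))"
    then have rc: "r < dA*dB" "c < dA*dB" by simp_all
    have rhs: "mat (dA*dB) (dA*dB) (\<lambda>rc. \<Sum>i<dA. complex_of_real (P i) * tensor_map 1 dY dA dB (RA i) (RB (sel i)) M $$ rc) $$ (r,c)
        = (\<Sum>i<dA. complex_of_real (P i) * (if r div dB = i \<and> c div dB = i then R M $$ (sel i*dB + r mod dB, sel i*dB + c mod dB) / complex_of_real (P (sel i)) else 0))"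
    proof -
      have "mat (dA*dB) (dA*dB) (\<lambda>rc. \<Sum>i<dA. complex_of_real (P i) * tensor_map 1 dY dA dB (RA i) (RB (sel i)) M $$ rc) $$ (r,c)
          = (\<Sum>i<dA. complex_of_real (P i) * tensor_map 1 dY dA dB (RA i) (RB (sel i)) M $$ (r,c))"
        by (simp only: index_mat(1)[OF rc])
      also have "\<dots> = (\<Sum>i<dA. complex_of_real (P i) * (if r div dB = i \<and> c div dB = i then R M $$ (sel i*dB + r mod dB, sel i*dB + c mod dB) / complex_of_real (P (sel i)) else 0))"
      proof (rule sum.cong[OF refl])
        fix i assume "i \<in> {..<dA}"
        then have i: "i < dA" by simp
        show "complex_of_real (P i) * tensor_map 1 dY dA dB (RA i) (RB (sel i)) M $$ (r,c) = complex_of_real (P i) * (if r div dB = i \<and> c div dB = i then R M $$ (sel i*dB + r mod dB, sel i*dB + c mod dB) / complex_of_real (P (sel i)) else 0)"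
          by (subst TM[OF M i rc]) (rule refl)
      qed
      finally show ?thesis .
    qed
    show "R M $$ (r,c) = mat (dA*dB) (dA*dB) (\<lambda>rc. \<Sum>i<dA. complex_of_real (P i) * tensor_map 1 dY dA dB (RA i) (RB (sel i)) M $$ rc) $$ (r,c)"
    proof (cases "r div dB = c div dB")
      case False
      have "\<And>i. (if r div dB = i \<and> c div dB = i then R M $$ (sel i*dB + r mod dB, sel i*dB + c mod dB) / complex_of_real (P (sel i)) else 0) = 0"
        using False by auto
      then show ?thesis unfolding rhs using offblock[OF M rc False] by simp
    next
      case True
      define a1 where "a1 = r div dB"
      have a1: "a1 < dA" unfolding a1_def using rc by (simp add: less_mult_imp_div_less)
      have "(\<Sum>i<dA. complex_of_real (P i) * (if r div dB = i \<and> c div dB = i then R M $$ (sel i*dB + r mod dB, sel i*dB + c mod dB) / complex_of_real (P (sel i)) else 0))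
          = (\<Sum>i<dA. if i = a1 then complex_of_real (P a1) * (R M $$ (sel a1*dB + r mod dB, sel a1*dB + c mod dB) / complex_of_real (P (sel a1))) else 0)"
        using True unfolding a1_def by (intro sum.cong) auto
      also have "\<dots> = complex_of_real (P a1) * (R M $$ (sel a1*dB + r mod dB, sel a1*dB + c mod dB) / complex_of_real (P (sel a1)))"
        by (rule sum_one_pt[OF a1])
      finally have eq: "(\<Sum>i<dA. complex_of_real (P i) * (if r div dB = i \<and> c div dB = i then R M $$ (sel i*dB + r mod dB, sel i*dB + c mod dB) / complex_of_real (P (sel i)) else 0))
          = complex_of_real (P a1) * (R M $$ (sel a1*dB + r mod dB, sel a1*dB + c mod dB) / complex_of_real (P (sel a1)))" .
      show ?thesis
      proof (cases "P a1 > 0")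
        case pos: True
        then have "sel a1 = a1" unfolding sel_def by simp
        moreover have "a1*dB + r mod dB = r" unfolding a1_def by simp
        moreover have "a1*dB + c mod dB = c" unfolding a1_def True by simp
        ultimately show ?thesis unfolding rhs eq using pos by simp
      next
        case False
        then have "P a1 = 0" using Pnn[OF a1] by simp
        then show ?thesis unfolding rhs eq using zblock[OF M rc True] unfolding a1_def by simp
      qed
    qed
  qed
  show "LOSR_free X Y A B R"
    unfolding LOSR_free_def dX dY_def[symmetric] dA_def[symmetric] dB_def[symmetric]
  proof (intro exI conjI)
    show "\<forall>i<dA. 0 \<le> P i" using Pnn by blast
    show "(\<Sum>i<dA. P i) = 1" by (rule Psum)
    show "\<forall>i<dA. is_single X A (RA i) \<and> is_single Y B (RB (sel i))"
      using singA singB sel by blast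
    show "\<forall>M\<in>carrier_mat (1 * dY) (1 * dY). R M = mat (dA * dB) (dA * dB)
        (\<lambda>rc. \<Sum>i<dA. complex_of_real (P i) * tensor_map 1 dY dA dB (RA i) (RB (sel i)) M $$ rc)"
      using eqn by simp
  qed
qed

end
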